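(* Let $1\le p\le q\le\infty$ and $r\in(0,\infty]$. There exists a constant $C\ge1$ such that $$C^{-1}\|f\|_{\hat M^p_{q,r}}\le\|D_p(h)A(s)T(y)P(\xi)f\|_{\hat M^p_{q,r}}\le C\|f\|_{\hat M^p_{q,r}}$$ for any $f\in\hat M^p_{q,r}$ and any $(h,\xi,s,y)\in2^{\mathbb Z}\times\mathbb R\times\mathbb R\times\mathbb R$. Moreover, if $\xi=0$, the inequalities hold with $C=1$.
   Context: $\mathcal D=\{[k2^{-j},(k+1)2^{-j}):j,k\in\mathbb Z\}$. For $1\le p\le q\le\infty$, $\|f\|_{\hat M^p_{q,r}}=\big\||I|^{\frac1q-\frac1p}\|\hat f\|_{L^{q'}(I)}\big\|_{\ell^r_{I\in\mathcal D}}$ (with sup if $r=\infty$), $q'$ the Hölder conjugate. $(T(y)f)(x)=f(x-y)$, $(P(\xi)f)(x)=e^{-ix\xi}f(x)$, $(D_p(h)f)(x)=h^{1/p}f(hx)$, $A(s)=e^{-s\partial_x^3}$ (Fourier multiplier $e^{is\xi^3}$). *)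

theory Defs
  imports "HOL-Analysis.Analysis"
begin

(* Functions f are represented through their Fourier transform F = \<hat>f :: real \<Rightarrow> complex,
   with the convention \<hat>f(\<eta>) = \<integral> e^{-ix\<eta>} f(x) dx. *)

definition recip :: "ennreal \<Rightarrow> real" where
  "recip p = enn2real (inverse p)"

definition hconj :: "ennreal \<Rightarrow> ennreal" where
  "hconj q = (if q = 1 then \<infinity> else if q = \<infinity> then 1 else ennreal (enn2real q / (enn2real q - 1)))"

definition epow :: "ennreal \<Rightarrow> real \<Rightarrow> ennreal" where
  "epow x a = (if x = \<infinity> then \<infinity> else ennreal (enn2real x powr a))"

definition Lnorm :: "ennreal \<Rightarrow> real set \<Rightarrow> (real \<Rightarrow> complex) \<Rightarrow> ennreal" where
  "Lnorm e I F =
     (if e = \<infinity> then Inf {z. AE x in lborel. x \<in> I \<longrightarrow> ennreal (cmod (F x)) \<le> z}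
      else epow (\<integral>\<^sup>+ x. indicator I x * ennreal (cmod (F x) powr enn2real e) \<partial>lborel)
                (1 / enn2real e))"

definition dyadic :: "int \<Rightarrow> int \<Rightarrow> real set" where
  "dyadic j k = {real_of_int k * 2 powr (- real_of_int j) ..< (real_of_int k + 1) * 2 powr (- real_of_int j)}"

definition locpiece :: "ennreal \<Rightarrow> ennreal \<Rightarrow> (real \<Rightarrow> complex) \<Rightarrow> int \<times> int \<Rightarrow> ennreal" where
  "locpiece p q F jk =
     ennreal ((2 powr (- real_of_int (fst jk))) powr (recip q - recip p))
       * Lnorm (hconj q) (dyadic (fst jk) (snd jk)) F"

definition hatM_norm :: "ennreal \<Rightarrow> ennreal \<Rightarrow> ennreal \<Rightarrow> (real \<Rightarrow> complex) \<Rightarrow> ennreal" where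
  "hatM_norm p q r F =
     (if r = \<infinity> then (SUP jk. locpiece p q F jk)
      else epow (\<integral>\<^sup>+ jk. epow (locpiece p q F jk) (enn2real r) \<partial>count_space UNIV)
                (1 / enn2real r))"

(* Fourier-side action of the operators:
   (T(y)f)^ (\<eta>) = e^{-iy\<eta>} \<hat>f(\<eta>),  (P(\<xi>)f)^ (\<eta>) = \<hat>f(\<eta>+\<xi>),
   (D_p(h)f)^ (\<eta>) = h^{1/p-1} \<hat>f(\<eta>/h),  (A(s)f)^ (\<eta>) = e^{is\<eta>^3} \<hat>f(\<eta>) *)
definition hatT :: "real \<Rightarrow> (real \<Rightarrow> complex) \<Rightarrow> real \<Rightarrow> complex" where
  "hatT y F = (\<lambda>\<eta>. cis (- (y * \<eta>)) * F \<eta>)"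

definition hatP :: "real \<Rightarrow> (real \<Rightarrow> complex) \<Rightarrow> real \<Rightarrow> complex" where
  "hatP \<xi> F = (\<lambda>\<eta>. F (\<eta> + \<xi>))"

definition hatD :: "ennreal \<Rightarrow> real \<Rightarrow> (real \<Rightarrow> complex) \<Rightarrow> real \<Rightarrow> complex" where
  "hatD p h F = (\<lambda>\<eta>. complex_of_real (h powr (recip p - 1)) * F (\<eta> / h))"

definition hatA :: "real \<Rightarrow> (real \<Rightarrow> complex) \<Rightarrow> real \<Rightarrow> complex" where
  "hatA s F = (\<lambda>\<eta>. cis (s * \<eta> ^ 3) * F \<eta>)"

end

theory Submission
  imports Defs
begin

lemma epow_cmult:
  assumes "c \<ge> 0" "a > 0"
  shows "epow (ennreal c * x) a = ennreal (c powr a) * epow x a"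
proof (cases x)
  case (real y)
  have e: "ennreal c * x = ennreal (c * y)" using real assms by (simp add: ennreal_mult)
  have "epow (ennreal (c*y)) a = ennreal ((c*y) powr a)" using real assms by (simp add: epow_def)
  also have "\<dots> = ennreal (c powr a) * ennreal (y powr a)" using real assms by (simp add: powr_mult ennreal_mult)
  finally show ?thesis using e real by (simp add: epow_def)
next
  case top
  show ?thesis
  proof (cases "c = 0")
    case True then show ?thesis using top by (simp add: epow_def)
  next
    case False then show ?thesis using top assms by (simp add: epow_def ennreal_mult_top)
  qed
qed

lemma epow_mono:
  assumes "x \<le> y" "a \<ge> 0"
  shows "epow x a \<le> epow y a"
proof (cases "y = \<infinity>")
  case True then show ?thesis by (simp add: epow_def)
next
  case False
  have xt: "x \<noteq> \<infinity>" using False assms(1) by (cases "x = \<infinity>") (simp_all add: top_unique)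
  have "enn2real x \<le> enn2real y" using False assms by (simp add: enn2real_mono less_top)
  then have "enn2real x powr a \<le> enn2real y powr a" using assms by (intro powr_mono2) auto
  then show ?thesis using False xt by (simp add: epow_def ennreal_leI)
qed

lemma epow_add_le:
  assumes "a > 0"
  shows "epow (x + y) a \<le> ennreal (2 powr a) * (epow x a + epow y a)"
proof -
  have "x + y \<le> ennreal 2 * max x y"
    by (cases "x \<le> y") (simp_all add: max_def mult_2 add_mono)
  then have "epow (x + y) a \<le> epow (ennreal 2 * max x y) a"
    using assms by (intro epow_mono) auto
  also have "\<dots> = ennreal (2 powr a) * epow (max x y) a"
    using epow_cmult[of 2 a "max x y"] assms by simp
  also have "epow (max x y) a \<le> epow x a + epow y a"
    by (cases "x \<le> y") (simp_all add: max_def)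
  finally show ?thesis by (simp add: mult_left_mono)
qed

lemma hconj_props:
  assumes "1 \<le> q" "q \<noteq> 1"
  shows "hconj q \<noteq> \<infinity>" "enn2real (hconj q) > 0" "1 / enn2real (hconj q) = 1 - recip q"
        "0 \<le> recip q" "recip q < 1"
proof -
  have all: "hconj q \<noteq> \<infinity> \<and> enn2real (hconj q) > 0 \<and> 1 / enn2real (hconj q) = 1 - recip q \<and> 0 \<le> recip q \<and> recip q < 1"
  proof (cases q)
    case top
    then show ?thesis by (simp add: hconj_def recip_def)
  next
    case (real x)
    have "ennreal 1 \<le> ennreal x" using assms real by simp
    then have "1 \<le> x" using real by (simp only: ennreal_le_iff)
    moreover have "x \<noteq> 1" using assms real by auto
    ultimately have x1: "x > 1" by simp
    have h: "hconj q = ennreal (x / (x - 1))" using real x1 assms by (simp add: hconj_def)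
    have r: "recip q = 1 / x" using real x1 by (simp add: recip_def ennreal_inverse_positive inverse_ennreal inverse_eq_divide)
    show ?thesis unfolding h r using x1 by (simp add: field_simps)
  qed
  then show "hconj q \<noteq> \<infinity>" "enn2real (hconj q) > 0" "1 / enn2real (hconj q) = 1 - recip q"
        "0 \<le> recip q" "recip q < 1" by auto
qed

lemma recip_one: "recip 1 = 1" by (simp add: recip_def)

lemma hconj_inf: "hconj q = \<infinity> \<longleftrightarrow> q = 1"
  by (simp add: hconj_def)


lemma Lnorm_affine_fin:
  fixes F G :: "real \<Rightarrow> complex"
  assumes Fm: "F \<in> borel_measurable lborel" and e: "e \<noteq> \<infinity>" "enn2real e > 0"
    and c: "c > 0" and a: "a \<ge> 0" and I: "I \<in> sets borel" and Jm: "J \<in> sets borel"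
    and J: "\<And>u. u \<in> J \<longleftrightarrow> - c * t + c * u \<in> I"
    and G: "\<And>x. cmod (G x) = a * cmod (F (t + x / c))"
  shows "Lnorm e I G = ennreal (a * c powr (1 / enn2real e)) * Lnorm e J F"
proof -
  define E where "E = enn2real e"
  have Fb[measurable]: "F \<in> borel_measurable borel" using Fm by simp
  have [measurable]: "I \<in> sets borel" "J \<in> sets borel" using I Jm by auto
  define f where "f x = indicator I x * ennreal ((a * cmod (F (t + x / c))) powr E)" for x
  have fm: "f \<in> borel_measurable borel" unfolding f_def by measurable
  have "(\<integral>\<^sup>+x. indicator I x * ennreal (cmod (G x) powr E) \<partial>lborel) = (\<integral>\<^sup>+x. f x \<partial>lborel)"
    by (simp add: f_def G)
  also have "\<dots> = ennreal \<bar>c\<bar> * (\<integral>\<^sup>+x. f (- c * t + c * x) \<partial>lborel)"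
    using nn_integral_real_affine[OF fm, of c "- c * t"] c by simp
  also have "(\<lambda>x. f (- c * t + c * x)) = (\<lambda>u. ennreal (a powr E) * (indicator J u * ennreal (cmod (F u) powr E)))"
  proof
    fix u
    have "t + (- c * t + c * u) / c = u" using c by (simp add: field_simps)
    moreover have "indicator I (- c * t + c * u) = (indicator J u :: ennreal)"
      using J[of u] by (simp add: indicator_def)
    ultimately show "f (- c * t + c * u) = ennreal (a powr E) * (indicator J u * ennreal (cmod (F u) powr E))"
      using a by (simp add: f_def powr_mult ennreal_mult mult_ac)
  qed
  also have "(\<integral>\<^sup>+u. ennreal (a powr E) * (indicator J u * ennreal (cmod (F u) powr E)) \<partial>lborel)
      = ennreal (a powr E) * (\<integral>\<^sup>+u. indicator J u * ennreal (cmod (F u) powr E) \<partial>lborel)"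
    by (rule nn_integral_cmult) measurable
  finally have X: "(\<integral>\<^sup>+x. indicator I x * ennreal (cmod (G x) powr E) \<partial>lborel)
     = ennreal (c * a powr E) * (\<integral>\<^sup>+u. indicator J u * ennreal (cmod (F u) powr E) \<partial>lborel)"
    using c by (simp add: ennreal_mult mult.assoc)
  have E0: "E > 0" using e by (simp add: E_def)
  have "(c * a powr E) powr (1 / E) = c powr (1 / E) * a"
    using c a E0 by (simp add: powr_mult powr_powr)
  then show ?thesis
    unfolding Lnorm_def using e X E0 c a
    by (simp add: E_def[symmetric] epow_cmult mult.commute)
qed

lemma Lnorm_affine_inf:
  fixes F G :: "real \<Rightarrow> complex"
  assumes Fm: "F \<in> borel_measurable lborel"
    and c: "c > 0" and I: "I \<in> sets borel" and Jm: "J \<in> sets borel"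
    and J: "\<And>u. u \<in> J \<longleftrightarrow> - c * t + c * u \<in> I"
    and G: "\<And>x. cmod (G x) = cmod (F (t + x / c))"
  shows "Lnorm \<infinity> I G = Lnorm \<infinity> J F"
proof -
  have Fb[measurable]: "F \<in> borel_measurable borel" using Fm by simp
  have [measurable]: "I \<in> sets borel" "J \<in> sets borel" using I Jm by auto
  have "(AE x in lborel. x \<in> I \<longrightarrow> ennreal (cmod (G x)) \<le> z) \<longleftrightarrow>
        (AE u in lborel. u \<in> J \<longrightarrow> ennreal (cmod (F u)) \<le> z)" for z
  proof
    assume A: "AE x in lborel. x \<in> I \<longrightarrow> ennreal (cmod (G x)) \<le> z"
    then have A': "AE x in lborel. x \<in> I \<longrightarrow> ennreal (cmod (F (t + x / c))) \<le> z" by (simp add: G)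
    have "AE u in lborel. (- c * t + c * u) \<in> I \<longrightarrow> ennreal (cmod (F (t + (- c * t + c * u) / c))) \<le> z"
      using c by (intro AE_borel_affine[OF _ _ A']) (auto, measurable)
    moreover have "\<And>u. t + (- c * t + c * u) / c = u" using c by (simp add: field_simps)
    ultimately show "AE u in lborel. u \<in> J \<longrightarrow> ennreal (cmod (F u)) \<le> z" by (simp add: J)
  next
    assume A: "AE u in lborel. u \<in> J \<longrightarrow> ennreal (cmod (F u)) \<le> z"
    have "AE x in lborel. (t + (1/c) * x) \<in> J \<longrightarrow> ennreal (cmod (F (t + (1/c) * x))) \<le> z"
      using c by (intro AE_borel_affine[OF _ _ A]) (auto, measurable)
    moreover have "\<And>x. - c * t + c * (t + (1/c) * x) = x" using c by (simp add: field_simps)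
    ultimately show "AE x in lborel. x \<in> I \<longrightarrow> ennreal (cmod (G x)) \<le> z" by (simp add: J G)
  qed
  then show ?thesis unfolding Lnorm_def by simp
qed


lemma Lnorm_mono_set:
  assumes "I \<subseteq> J"
  shows "Lnorm e I F \<le> Lnorm e J F"
proof (cases "e = \<infinity>")
  case True
  have "{z. AE x in lborel. x \<in> J \<longrightarrow> ennreal (cmod (F x)) \<le> z} \<subseteq> {z. AE x in lborel. x \<in> I \<longrightarrow> ennreal (cmod (F x)) \<le> z}"
    using assms by (auto elim!: eventually_mono)
  then show ?thesis using True unfolding Lnorm_def by (simp add: Inf_superset_mono)
next
  case False
  have "(\<integral>\<^sup>+ x. indicator I x * ennreal (cmod (F x) powr enn2real e) \<partial>lborel)
      \<le> (\<integral>\<^sup>+ x. indicator J x * ennreal (cmod (F x) powr enn2real e) \<partial>lborel)"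
    using assms by (intro nn_integral_mono) (auto simp: indicator_def)
  then show ?thesis using False unfolding Lnorm_def by (simp add: epow_mono)
qed

lemma less_add_eps:
  fixes x :: ennreal
  assumes "x < top" "0 < e"
  shows "x < x + ennreal e"
proof -
  obtain r where r: "x = ennreal r" "0 \<le> r" using assms(1) by (cases x) auto
  have "ennreal r < ennreal (r + e)" using r assms by (subst ennreal_less_iff) auto
  then show ?thesis using r assms by (simp add: ennreal_plus)
qed
lemma le_add_r: "(a::ennreal) \<le> b \<Longrightarrow> a \<le> b + c" by (simp add: add_increasing2)
lemma le_add_l: "(a::ennreal) \<le> c \<Longrightarrow> a \<le> b + c" by (simp add: add_increasing)
lemma Lnorm_union:
  assumes Fm: "F \<in> borel_measurable lborel" and A: "A \<in> sets borel" and B: "B \<in> sets borel"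
    and e: "e \<noteq> \<infinity> \<Longrightarrow> enn2real e \<ge> 1"
  shows "Lnorm e (A \<union> B) F \<le> 2 * (Lnorm e A F + Lnorm e B F)"
proof (cases "e = \<infinity>")
  case True
  define S where "S C = {z. AE x in lborel. x \<in> C \<longrightarrow> ennreal (cmod (F x)) \<le> z}" for C
  have "Inf (S (A \<union> B)) \<le> Inf (S A) + Inf (S B)"
  proof (rule ennreal_le_epsilon)
    fix \<epsilon> :: real assume fin: "Inf (S A) + Inf (S B) < top" and eps: "0 < \<epsilon>"
    have "Inf (S A) < Inf (S A) + ennreal (\<epsilon>/2)"
      using fin eps by (intro less_add_eps) auto
    then obtain z1 where z1: "z1 \<in> S A" "z1 < Inf (S A) + ennreal (\<epsilon>/2)" by (auto simp: Inf_less_iff)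
    have "Inf (S B) < Inf (S B) + ennreal (\<epsilon>/2)"
      using fin eps by (intro less_add_eps) auto
    then obtain z2 where z2: "z2 \<in> S B" "z2 < Inf (S B) + ennreal (\<epsilon>/2)" by (auto simp: Inf_less_iff)
    have "z1 + z2 \<in> S (A \<union> B)"
      using z1(1) z2(1) unfolding S_def
      by (auto elim!: eventually_elim2 intro: le_add_r le_add_l)
    then have "Inf (S (A \<union> B)) \<le> z1 + z2" by (rule Inf_lower)
    also have "\<dots> \<le> (Inf (S A) + ennreal (\<epsilon>/2)) + (Inf (S B) + ennreal (\<epsilon>/2))"
      using z1 z2 by (intro add_mono) auto
    also have "\<dots> = Inf (S A) + Inf (S B) + ennreal \<epsilon>"
    proof -
      have "ennreal (\<epsilon>/2) + ennreal (\<epsilon>/2) = ennreal \<epsilon>" using eps by (simp flip: ennreal_plus)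
      then show ?thesis by (metis add.assoc add.commute)
    qed
    finally show "Inf (S (A \<union> B)) \<le> Inf (S A) + Inf (S B) + ennreal \<epsilon>" .
  qed
  also have "\<dots> \<le> 2 * (Inf (S A) + Inf (S B))" by (simp add: mult_2)
  finally show ?thesis using True unfolding Lnorm_def S_def by simp
next
  case False
  define E where "E = enn2real e"
  have E1: "E \<ge> 1" using e False by (simp add: E_def)
  have Fb[measurable]: "F \<in> borel_measurable borel" using Fm by simp
  have [measurable]: "A \<in> sets borel" "B \<in> sets borel" using A B by auto
  have "(\<integral>\<^sup>+ x. indicator (A \<union> B) x * ennreal (cmod (F x) powr E) \<partial>lborel)
      \<le> (\<integral>\<^sup>+ x. indicator A x * ennreal (cmod (F x) powr E) + indicator B x * ennreal (cmod (F x) powr E) \<partial>lborel)"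
    by (intro nn_integral_mono) (auto simp: indicator_def)
  also have "\<dots> = (\<integral>\<^sup>+ x. indicator A x * ennreal (cmod (F x) powr E) \<partial>lborel) + (\<integral>\<^sup>+ x. indicator B x * ennreal (cmod (F x) powr E) \<partial>lborel)"
    by (rule nn_integral_add) measurable
  finally have le: "(\<integral>\<^sup>+ x. indicator (A \<union> B) x * ennreal (cmod (F x) powr E) \<partial>lborel) \<le> \<dots>" .
  have "Lnorm e (A \<union> B) F \<le> epow ((\<integral>\<^sup>+ x. indicator A x * ennreal (cmod (F x) powr E) \<partial>lborel) + (\<integral>\<^sup>+ x. indicator B x * ennreal (cmod (F x) powr E) \<partial>lborel)) (1 / E)"
    using False le E1 unfolding Lnorm_def E_def by (simp add: epow_mono)
  also have "\<dots> \<le> ennreal (2 powr (1/E)) * (Lnorm e A F + Lnorm e B F)"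
    using False E1 epow_add_le[of "1/E"] unfolding Lnorm_def E_def by simp
  also have "ennreal (2 powr (1/E)) \<le> 2"
  proof -
    have "2 powr (1/E) \<le> 2 powr 1" using E1 by (intro powr_mono) auto
    then have "ennreal (2 powr (1/E)) \<le> ennreal 2" by (intro ennreal_leI) simp
    then show ?thesis by simp
  qed
  then have "ennreal (2 powr (1/E)) * (Lnorm e A F + Lnorm e B F) \<le> 2 * (Lnorm e A F + Lnorm e B F)"
    by (rule mult_right_mono) simp
  finally show ?thesis .
qed


lemma dyadic_borel[measurable]: "dyadic j k \<in> sets borel"
  by (simp add: dyadic_def)

lemma dyadic_scale:
  fixes m j k :: int
  shows "(u \<in> dyadic (j + m) k) \<longleftrightarrow> (- (2 powr m) * 0 + (2 powr m) * u \<in> dyadic j k)"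
proof -
  have e: "2 powr (- real_of_int (j + m)) = 2 powr (- real_of_int j) / 2 powr (real_of_int m)"
    by (simp add: powr_diff[symmetric])
  have p: "(2::real) powr real_of_int m > 0" by simp
  show ?thesis unfolding dyadic_def e using p
    by (simp add: field_simps)
qed

lemma shift_set_borel: "{u. u - \<xi> \<in> dyadic j k} \<in> sets borel"
proof -
  have "{u. u - \<xi> \<in> dyadic j k} = {real_of_int k * 2 powr (- real_of_int j) + \<xi> ..< (real_of_int k + 1) * 2 powr (- real_of_int j) + \<xi>}"
    by (auto simp: dyadic_def)
  then show ?thesis by simp
qed

lemma shift_cover:
  fixes \<xi> :: real and j k :: int
  defines "c \<equiv> \<lfloor>\<xi> * 2 powr real_of_int j\<rfloor>"
  shows "{u. u - \<xi> \<in> dyadic j k} \<subseteq> dyadic j (k + c) \<union> dyadic j (k + c + 1)"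
proof
  fix u assume "u \<in> {u. u - \<xi> \<in> dyadic j k}"
  then have u: "real_of_int k * 2 powr (- real_of_int j) \<le> u - \<xi>" "u - \<xi> < (real_of_int k + 1) * 2 powr (- real_of_int j)"
    by (auto simp: dyadic_def)
  define d where "d = (2::real) powr (- real_of_int j)"
  have d: "d > 0" by (simp add: d_def)
  have inv: "2 powr real_of_int j = 1 / d" by (simp add: d_def powr_minus divide_inverse)
  have c1: "real_of_int c \<le> \<xi> / d" "\<xi> / d < real_of_int c + 1"
    unfolding c_def inv by (simp_all add: divide_inverse)
  have c2: "real_of_int c * d \<le> \<xi>" "\<xi> < (real_of_int c + 1) * d"
    using c1 d by (simp_all add: field_simps)
  have lo: "real_of_int (k + c) * d \<le> u" using u c2 unfolding d_def[symmetric] by (simp add: algebra_simps)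
  have hi: "u < real_of_int (k + c + 1 + 1) * d" using u c2 unfolding d_def[symmetric] by (simp add: algebra_simps)
  show "u \<in> dyadic j (k + c) \<union> dyadic j (k + c + 1)"
  proof (cases "u < real_of_int (k + c + 1) * d")
    case True then show ?thesis using lo unfolding dyadic_def d_def[symmetric] by simp
  next
    case False then show ?thesis using hi unfolding dyadic_def d_def[symmetric] by simp
  qed
qed


lemma hconj_ge1:
  assumes "1 \<le> q" "q \<noteq> 1"
  shows "enn2real (hconj q) \<ge> 1"
proof -
  have "1 / enn2real (hconj q) \<le> 1" "enn2real (hconj q) > 0"
    using hconj_props[OF assms] by auto
  then show ?thesis by (simp add: divide_le_eq)
qed

lemma measurable_hatP[measurable]:
  "F \<in> borel_measurable lborel \<Longrightarrow> hatP \<xi> F \<in> borel_measurable lborel"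
  unfolding hatP_def by simp

lemma locpiece_D:
  fixes m j k :: int
  assumes Fm: "F \<in> borel_measurable lborel" and pq: "1 \<le> p" "p \<le> q"
  shows "locpiece p q (hatD p (2 powr real_of_int m) (hatA s (hatT y F))) (j, k) = locpiece p q F (j + m, k)"
proof -
  define h where "h = (2::real) powr real_of_int m"
  have h: "h > 0" by (simp add: h_def)
  have G: "cmod (hatD p h (hatA s (hatT y F)) x) = h powr (recip p - 1) * cmod (F (0 + x / h))" for x
    by (simp add: hatD_def hatA_def hatT_def norm_mult)
  have J: "u \<in> dyadic (j + m) k \<longleftrightarrow> - h * 0 + h * u \<in> dyadic j k" for u
    unfolding h_def by (rule dyadic_scale)
  show ?thesis
  proof (cases "q = 1")
    case True
    then have p1: "p = 1" using pq by (auto intro: antisym)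
    have "Lnorm (hconj q) (dyadic j k) (hatD p h (hatA s (hatT y F))) = Lnorm (hconj q) (dyadic (j + m) k) F"
    proof -
      have G1: "cmod (hatD p h (hatA s (hatT y F)) x) = cmod (F (0 + x / h))" for x
        using G[of x] p1 h by (simp add: recip_one)
      show ?thesis using Lnorm_affine_inf[OF Fm h dyadic_borel dyadic_borel J G1] True
        by (simp add: hconj_def)
    qed
    then show ?thesis using True p1 unfolding locpiece_def h_def by simp
  next
    case False
    have q1: "1 \<le> q" using pq by (rule order_trans)
    note hp = hconj_props[OF q1 False]
    have "Lnorm (hconj q) (dyadic j k) (hatD p h (hatA s (hatT y F)))
        = ennreal (h powr (recip p - 1) * h powr (1 / enn2real (hconj q))) * Lnorm (hconj q) (dyadic (j + m) k) F"
      by (rule Lnorm_affine_fin[OF Fm hp(1) hp(2) h _ dyadic_borel dyadic_borel J G]) simp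
    also have "h powr (recip p - 1) * h powr (1 / enn2real (hconj q)) = h powr (recip p - recip q)"
      using hp(3) by (simp add: powr_add[symmetric])
    finally have L: "Lnorm (hconj q) (dyadic j k) (hatD p h (hatA s (hatT y F)))
        = ennreal (h powr (recip p - recip q)) * Lnorm (hconj q) (dyadic (j + m) k) F" .
    have R: "(2 powr (- real_of_int j)) powr (recip q - recip p) * h powr (recip p - recip q)
        = (2 powr (- real_of_int (j + m))) powr (recip q - recip p)"
      unfolding h_def by (simp add: powr_powr powr_add[symmetric] algebra_simps)
    have "locpiece p q (hatD p h (hatA s (hatT y F))) (j, k)
       = ennreal ((2 powr (- real_of_int j)) powr (recip q - recip p)) * Lnorm (hconj q) (dyadic j k) (hatD p h (hatA s (hatT y F)))"
      by (simp add: locpiece_def)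
    also have "\<dots> = ennreal ((2 powr (- real_of_int j)) powr (recip q - recip p)) * (ennreal (h powr (recip p - recip q)) * Lnorm (hconj q) (dyadic (j + m) k) F)"
      by (simp only: L)
    also have "\<dots> = ennreal ((2 powr (- real_of_int j)) powr (recip q - recip p) * h powr (recip p - recip q)) * Lnorm (hconj q) (dyadic (j + m) k) F"
      by (simp add: ennreal_mult mult.assoc)
    also have "\<dots> = locpiece p q F (j + m, k)"
      by (simp only: R) (simp add: locpiece_def)
    finally show ?thesis unfolding h_def .
  qed
qed

lemma Lnorm_shift:
  assumes Fm: "F \<in> borel_measurable lborel" and e: "e \<noteq> \<infinity> \<Longrightarrow> enn2real e > 0"
  shows "Lnorm e (dyadic j k) (hatP \<xi> F) = Lnorm e {u. u - \<xi> \<in> dyadic j k} F"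
proof -
  have G: "cmod (hatP \<xi> F x) = cmod (F (\<xi> + x / 1))" for x by (simp add: hatP_def add.commute)
  have G1: "cmod (hatP \<xi> F x) = 1 * cmod (F (\<xi> + x / 1))" for x by (simp add: G)
  have J: "u \<in> {u. u - \<xi> \<in> dyadic j k} \<longleftrightarrow> - 1 * \<xi> + 1 * u \<in> dyadic j k" for u by simp
  show ?thesis
  proof (cases "e = \<infinity>")
    case True
    then show ?thesis using Lnorm_affine_inf[OF Fm _ dyadic_borel shift_set_borel J G] by simp
  next
    case False
    then show ?thesis using Lnorm_affine_fin[OF Fm False e[OF False] _ _ dyadic_borel shift_set_borel J G1] by simp
  qed
qed

lemma locpiece_shift:
  fixes \<xi> :: real and j k :: int
  assumes Fm: "F \<in> borel_measurable lborel" and pq: "1 \<le> p" "p \<le> q"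
  defines "c \<equiv> \<lfloor>\<xi> * 2 powr real_of_int j\<rfloor>"
  shows "locpiece p q (hatP \<xi> F) (j, k) \<le> 2 * (locpiece p q F (j, k + c) + locpiece p q F (j, k + c + 1))"
proof -
  have q1: "1 \<le> q" using pq by (rule order_trans)
  have e1: "hconj q \<noteq> \<infinity> \<Longrightarrow> enn2real (hconj q) > 0"
    using hconj_props(2)[OF q1] hconj_inf by auto
  have e2: "hconj q \<noteq> \<infinity> \<Longrightarrow> enn2real (hconj q) \<ge> 1"
    using hconj_ge1[OF q1] hconj_inf by auto
  have "Lnorm (hconj q) (dyadic j k) (hatP \<xi> F) = Lnorm (hconj q) {u. u - \<xi> \<in> dyadic j k} F"
    by (rule Lnorm_shift[OF Fm e1])
  also have "\<dots> \<le> Lnorm (hconj q) (dyadic j (k + c) \<union> dyadic j (k + c + 1)) F"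
    unfolding c_def by (intro Lnorm_mono_set shift_cover)
  also have "\<dots> \<le> 2 * (Lnorm (hconj q) (dyadic j (k + c)) F + Lnorm (hconj q) (dyadic j (k + c + 1)) F)"
    by (rule Lnorm_union[OF Fm dyadic_borel dyadic_borel e2])
  finally have L: "Lnorm (hconj q) (dyadic j k) (hatP \<xi> F) \<le> \<dots>" .
  define w where "w = ennreal ((2 powr (- real_of_int j)) powr (recip q - recip p))"
  have "locpiece p q (hatP \<xi> F) (j, k) = w * Lnorm (hconj q) (dyadic j k) (hatP \<xi> F)"
    by (simp add: locpiece_def w_def)
  also have "\<dots> \<le> w * (2 * (Lnorm (hconj q) (dyadic j (k + c)) F + Lnorm (hconj q) (dyadic j (k + c + 1)) F))"
    using L by (rule mult_left_mono) simp
  also have "\<dots> = 2 * (locpiece p q F (j, k + c) + locpiece p q F (j, k + c + 1))"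
    by (simp add: locpiece_def w_def algebra_simps)
  finally show ?thesis .
qed


lemma bij_shiftk: "bij (\<lambda>(j::int, k::int). (j, k + d j))"
  by (rule o_bij[where g="\<lambda>(j, k). (j, k - d j)"]) (auto simp: fun_eq_iff)

lemma bij_shiftj: "bij (\<lambda>(j::int, k::int). (j + m, k))"
  by (rule o_bij[where g="\<lambda>(j, k). (j - m, k)"]) (auto simp: fun_eq_iff)

lemma hatM_reindex:
  assumes b: "bij \<sigma>" and L: "\<And>jk. locpiece p q G jk = locpiece p q F (\<sigma> jk)"
  shows "hatM_norm p q r G = hatM_norm p q r F"
proof -
  have "(SUP jk. locpiece p q G jk) = (SUP jk. locpiece p q F jk)"
  proof -
    have "(SUP jk. locpiece p q G jk) = Sup (locpiece p q F ` range \<sigma>)"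
      by (simp add: L image_comp)
    also have "range \<sigma> = UNIV" using b by (simp add: bij_is_surj surj_def)
    finally show ?thesis by simp
  qed
  moreover have "(\<integral>\<^sup>+ jk. epow (locpiece p q G jk) (enn2real r) \<partial>count_space UNIV)
       = (\<integral>\<^sup>+ jk. epow (locpiece p q F jk) (enn2real r) \<partial>count_space UNIV)"
    unfolding L using nn_integral_bij_count_space[OF b, of "\<lambda>x. epow (locpiece p q F x) (enn2real r)"] by simp
  ultimately show ?thesis unfolding hatM_norm_def by simp
qed

definition Cr :: "ennreal \<Rightarrow> real" where
  "Cr r = (if r = \<infinity> then 4 else 2 powr (2 + 1 / enn2real r))"

lemma Cr_ge1: "r > 0 \<Longrightarrow> Cr r \<ge> 1"
proof (cases "r = \<infinity>")
  case False
  assume r: "r > 0"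
  have "enn2real r > 0" using r False by (simp add: enn2real_positive_iff less_top)
  then have "(1::real) \<le> 2 powr (2 + 1 / enn2real r)" by (intro ge_one_powr_ge_zero) auto
  then show ?thesis using False by (simp add: Cr_def)
qed (simp add: Cr_def)

lemma hatM_bound:
  assumes b1: "bij \<sigma>1" and b2: "bij \<sigma>2" and r: "r > 0"
    and L: "\<And>jk. locpiece p q G jk \<le> 2 * (locpiece p q F (\<sigma>1 jk) + locpiece p q F (\<sigma>2 jk))"
  shows "hatM_norm p q r G \<le> ennreal (Cr r) * hatM_norm p q r F"
proof (cases "r = \<infinity>")
  case True
  define S where "S = (SUP jk. locpiece p q F jk)"
  have "(SUP jk. locpiece p q G jk) \<le> 2 * (S + S)"
  proof (rule SUP_least)
    fix jk :: "int \<times> int"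
    have "locpiece p q F (\<sigma>1 jk) + locpiece p q F (\<sigma>2 jk) \<le> S + S"
      unfolding S_def by (intro add_mono SUP_upper) auto
    then show "locpiece p q G jk \<le> 2 * (S + S)"
      using L[of jk] by (meson mult_left_mono order_trans zero_le)
  qed
  also have "2 * (S + S) = ennreal 4 * S"
  proof -
    have "(2::ennreal) * (S + S) = (2 + 2) * S" by (simp only: distrib_left distrib_right)
    also have "(2::ennreal) + 2 = 4" by simp
    finally show ?thesis by simp
  qed
  finally show ?thesis using True unfolding hatM_norm_def Cr_def S_def by simp
next
  case False
  define R where "R = enn2real r"
  have R: "R > 0" using r False by (simp add: R_def enn2real_positive_iff less_top)
  define f where "f jk = epow (locpiece p q F jk) R" for jk
  have pt: "epow (locpiece p q G jk) R \<le> ennreal (2 powr R * 2 powr R) * (f (\<sigma>1 jk) + f (\<sigma>2 jk))" for jk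
  proof -
    have "epow (locpiece p q G jk) R \<le> epow (ennreal 2 * (locpiece p q F (\<sigma>1 jk) + locpiece p q F (\<sigma>2 jk))) R"
      using L[of jk] R by (intro epow_mono) auto
    also have "\<dots> = ennreal (2 powr R) * epow (locpiece p q F (\<sigma>1 jk) + locpiece p q F (\<sigma>2 jk)) R"
      using R by (intro epow_cmult) auto
    also have "\<dots> \<le> ennreal (2 powr R) * (ennreal (2 powr R) * (f (\<sigma>1 jk) + f (\<sigma>2 jk)))"
      unfolding f_def by (intro mult_left_mono epow_add_le R) simp
    finally show ?thesis by (simp add: ennreal_mult mult.assoc)
  qed
  have "(\<integral>\<^sup>+ jk. epow (locpiece p q G jk) R \<partial>count_space UNIV)
      \<le> (\<integral>\<^sup>+ jk. ennreal (2 powr R * 2 powr R) * (f (\<sigma>1 jk) + f (\<sigma>2 jk)) \<partial>count_space UNIV)"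
    by (intro nn_integral_mono pt)
  also have "\<dots> = ennreal (2 powr R * 2 powr R) * ((\<integral>\<^sup>+ jk. f (\<sigma>1 jk) \<partial>count_space UNIV) + (\<integral>\<^sup>+ jk. f (\<sigma>2 jk) \<partial>count_space UNIV))"
    by (simp add: nn_integral_cmult nn_integral_add)
  also have "\<dots> = ennreal (2 powr R * 2 powr R) * (2 * (\<integral>\<^sup>+ jk. f jk \<partial>count_space UNIV))"
    using nn_integral_bij_count_space[OF b1, of f] nn_integral_bij_count_space[OF b2, of f]
    by (simp add: mult_2)
  also have "\<dots> = ennreal (2 * (2 powr R * 2 powr R)) * (\<integral>\<^sup>+ jk. f jk \<partial>count_space UNIV)"
    by (simp add: ennreal_mult mult_ac)
  finally have X: "(\<integral>\<^sup>+ jk. epow (locpiece p q G jk) R \<partial>count_space UNIV) \<le> \<dots>" .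
  have "epow (\<integral>\<^sup>+ jk. epow (locpiece p q G jk) R \<partial>count_space UNIV) (1 / R)
      \<le> epow (ennreal (2 * (2 powr R * 2 powr R)) * (\<integral>\<^sup>+ jk. f jk \<partial>count_space UNIV)) (1 / R)"
    using X R by (intro epow_mono) auto
  also have "\<dots> = ennreal ((2 * (2 powr R * 2 powr R)) powr (1 / R)) * epow (\<integral>\<^sup>+ jk. f jk \<partial>count_space UNIV) (1 / R)"
    using R by (intro epow_cmult) auto
  also have "(2 * (2 powr R * 2 powr R)) powr (1 / R) = Cr r"
  proof -
    have "(2::real) powr (1 + 2 * R) = 2 powr (1 + (R + R))" by simp
    also have "\<dots> = 2 powr 1 * (2 powr R * 2 powr R)" by (simp only: powr_add)
    finally have "2 * (2 powr R * 2 powr R) = (2::real) powr (1 + 2 * R)" by simp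
    then have "(2 * (2 powr R * 2 powr R)) powr (1 / R) = 2 powr ((1 + 2 * R) * (1 / R))"
      by (simp add: powr_powr)
    also have "(1 + 2 * R) * (1 / R) = 2 + 1 / R" using R by (simp add: field_simps)
    finally show ?thesis using False by (simp add: Cr_def R_def)
  qed
  finally show ?thesis using False unfolding hatM_norm_def f_def R_def by simp
qed


lemma hatP_bound:
  fixes \<xi> :: real
  assumes Fm: "F \<in> borel_measurable lborel" and pq: "1 \<le> p" "p \<le> q" and r: "r > 0"
  shows "hatM_norm p q r (hatP \<xi> F) \<le> ennreal (Cr r) * hatM_norm p q r F"
proof -
  define d where "d j = \<lfloor>\<xi> * 2 powr real_of_int j\<rfloor>" for j :: int
  show ?thesis
  proof (rule hatM_bound[OF bij_shiftk[of d] bij_shiftk[of "\<lambda>j. d j + 1"] r])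
    fix jk :: "int \<times> int"
    obtain j k where jk: "jk = (j, k)" by (cases jk)
    show "locpiece p q (hatP \<xi> F) jk \<le> 2 * (locpiece p q F ((\<lambda>(j, k). (j, k + d j)) jk) + locpiece p q F ((\<lambda>(j, k). (j, k + (d j + 1))) jk))"
      using locpiece_shift[OF Fm pq, of \<xi> j k] unfolding jk d_def by (simp add: add.assoc)
  qed
qed

lemma hatD_eq:
  fixes m :: int
  assumes Fm: "F \<in> borel_measurable lborel" and pq: "1 \<le> p" "p \<le> q"
  shows "hatM_norm p q r (hatD p (2 powr real_of_int m) (hatA s (hatT y F))) = hatM_norm p q r F"
proof (rule hatM_reindex[OF bij_shiftj[of m]])
  fix jk :: "int \<times> int"
  obtain j k where jk: "jk = (j, k)" by (cases jk)
  show "locpiece p q (hatD p (2 powr real_of_int m) (hatA s (hatT y F))) jk = locpiece p q F ((\<lambda>(j, k). (j + m, k)) jk)"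
    using locpiece_D[OF Fm pq, of m s y j k] unfolding jk by simp
qed

theorem lemma2p3:
  fixes p q r :: ennreal
  assumes "1 \<le> p" and "p \<le> q" and "0 < r"
  shows "(\<exists>C::real. C \<ge> 1 \<and>
           (\<forall>F m \<xi> s y. F \<in> borel_measurable lborel \<and> hatM_norm p q r F < \<infinity> \<longrightarrow>
              ennreal (1 / C) * hatM_norm p q r F
                \<le> hatM_norm p q r (hatD p (2 powr real_of_int m) (hatA s (hatT y (hatP \<xi> F))))
            \<and> hatM_norm p q r (hatD p (2 powr real_of_int m) (hatA s (hatT y (hatP \<xi> F))))
                \<le> ennreal C * hatM_norm p q r F))
       \<and> (\<forall>F m s y. F \<in> borel_measurable lborel \<and> hatM_norm p q r F < \<infinity> \<longrightarrow>
              hatM_norm p q r F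
                \<le> hatM_norm p q r (hatD p (2 powr real_of_int m) (hatA s (hatT y (hatP 0 F))))
            \<and> hatM_norm p q r (hatD p (2 powr real_of_int m) (hatA s (hatT y (hatP 0 F))))
                \<le> hatM_norm p q r F)"
proof (intro conjI)
  let ?N = "hatM_norm p q r"
  have C1: "Cr r \<ge> 1" using Cr_ge1 assms(3) .
  show "\<exists>C::real. C \<ge> 1 \<and>
           (\<forall>F m \<xi> s y. F \<in> borel_measurable lborel \<and> ?N F < \<infinity> \<longrightarrow>
              ennreal (1 / C) * ?N F
                \<le> ?N (hatD p (2 powr real_of_int m) (hatA s (hatT y (hatP \<xi> F))))
            \<and> ?N (hatD p (2 powr real_of_int m) (hatA s (hatT y (hatP \<xi> F))))
                \<le> ennreal C * ?N F)"
  proof (intro exI[of _ "Cr r"] conjI allI impI C1)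
    fix F :: "real \<Rightarrow> complex" and m :: int and \<xi> s y :: real
    assume "F \<in> borel_measurable lborel \<and> ?N F < \<infinity>"
    then have Fm: "F \<in> borel_measurable lborel" by simp
    have eqD: "?N (hatD p (2 powr real_of_int m) (hatA s (hatT y (hatP \<xi> F)))) = ?N (hatP \<xi> F)"
      by (rule hatD_eq[OF measurable_hatP[OF Fm] assms(1,2)])
    have up: "?N (hatP \<xi> F) \<le> ennreal (Cr r) * ?N F"
      by (rule hatP_bound[OF Fm assms])
    have "hatP (- \<xi>) (hatP \<xi> F) = F" by (simp add: hatP_def)
    then have lo: "?N F \<le> ennreal (Cr r) * ?N (hatP \<xi> F)"
      using hatP_bound[OF measurable_hatP[OF Fm, of \<xi>] assms, of "- \<xi>"] by simp
    have "ennreal (1 / Cr r) * ?N F \<le> ennreal (1 / Cr r) * (ennreal (Cr r) * ?N (hatP \<xi> F))"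
      using lo by (rule mult_left_mono) simp
    also have "\<dots> = (ennreal (1 / Cr r) * ennreal (Cr r)) * ?N (hatP \<xi> F)"
      by (simp only: mult.assoc)
    also have "ennreal (1 / Cr r) * ennreal (Cr r) = 1"
    proof -
      have "ennreal (1 / Cr r * Cr r) = ennreal (1 / Cr r) * ennreal (Cr r)" using C1 by (intro ennreal_mult) auto
      moreover have "1 / Cr r * Cr r = 1" using C1 by simp
      ultimately show ?thesis by simp
    qed
    also have "1 * ?N (hatP \<xi> F) = ?N (hatP \<xi> F)" by simp
    finally show "ennreal (1 / Cr r) * ?N F \<le> ?N (hatD p (2 powr real_of_int m) (hatA s (hatT y (hatP \<xi> F))))"
      using eqD by simp
    show "?N (hatD p (2 powr real_of_int m) (hatA s (hatT y (hatP \<xi> F)))) \<le> ennreal (Cr r) * ?N F"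
      using eqD up by simp
  qed
  show "\<forall>F m s y. F \<in> borel_measurable lborel \<and> ?N F < \<infinity> \<longrightarrow>
              ?N F \<le> ?N (hatD p (2 powr real_of_int m) (hatA s (hatT y (hatP 0 F))))
            \<and> ?N (hatD p (2 powr real_of_int m) (hatA s (hatT y (hatP 0 F)))) \<le> ?N F"
  proof (intro allI impI)
    fix F :: "real \<Rightarrow> complex" and m :: int and s y :: real
    assume "F \<in> borel_measurable lborel \<and> ?N F < \<infinity>"
    then have Fm: "F \<in> borel_measurable lborel" by simp
    have "hatP 0 F = F" by (simp add: hatP_def)
    then have "?N (hatD p (2 powr real_of_int m) (hatA s (hatT y (hatP 0 F)))) = ?N F"
      using hatD_eq[OF Fm assms(1,2)] by simp
    then show "?N F \<le> ?N (hatD p (2 powr real_of_int m) (hatA s (hatT y (hatP 0 F))))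
            \<and> ?N (hatD p (2 powr real_of_int m) (hatA s (hatT y (hatP 0 F)))) \<le> ?N F" by simp
  qed
qed

end
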